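(* Let $d\ge 2$ and $0<\delta<\frac{\pi}{2}$. A smooth convex body $D\subset S^d$ is of constant diameter $\delta$ if and only if it is of constant width $\delta$.
   Context: $S^d$ is the unit sphere in $E^{d+1}$; $|ab|$ denotes spherical distance (length of the shorter great-circle arc $ab$). A set containing no pair of antipodes is convex if it contains the arc joining any two of its points; a closed convex set with non-empty interior is a convex body. A hemisphere is the intersection of $S^d$ with a closed half-space of $E^{d+1}$ bounded by a hyperplane through the origin. A hemisphere $H$ supports a convex body $C$ at $p$ if $C\subset H$ and $p\in\mathrm{bd}(H)\cap C$; $p\in\mathrm{bd}(C)$ is a smooth point if exactly one hemisphere supports $C$ at $p$, and $C$ is smooth if all its boundary points are smooth. For different, non-opposite hemispheres $G,H$, the lune $G\cap H$ has thickness equal to the spherical distance between the centers of the $(d-1)$-dimensional hemispheres $\mathrm{bd}(G)\cap H$ and $\mathrm{bd}(H)\cap G$. For a hemisphere $K$ supporting $C$, $\mathrm{width}_K(C)$ is the thickness of a narrowest lune of the form $K\cap K^*$ containing $C$; $C$ is of constant width $w$ if $\mathrm{width}_K(C)=w$ for every supporting hemisphere $K$ of $C$. A convex body $D$ of diameter $\delta$ is of constant diameter $\delta$ if for every $p\in\mathrm{bd}(D)$ there is $p'\in\mathrm{bd}(D)$ with $|pp'|=\delta$. *)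

theory Defs
  imports "HOL-Analysis.Analysis"
begin

text \<open>The unit sphere S^d of E^{d+1}, realised in a Euclidean space 'a with DIM('a) = d+1.\<close>

abbreviation S :: "'a::euclidean_space set" where
  "S \<equiv> sphere 0 1"

definition sdist :: "'a::euclidean_space \<Rightarrow> 'a \<Rightarrow> real" where
  "sdist a b = arccos (a \<bullet> b)"

text \<open>The shorter great-circle arc joining two non-antipodal points of S.\<close>
definition sarc :: "'a::euclidean_space \<Rightarrow> 'a \<Rightarrow> 'a set" where
  "sarc a b = {(1 / norm ((1 - t) *\<^sub>R a + t *\<^sub>R b)) *\<^sub>R ((1 - t) *\<^sub>R a + t *\<^sub>R b) | t. t \<in> {0..1}}"

definition no_antipodes :: "'a::euclidean_space set \<Rightarrow> bool" where
  "no_antipodes C \<longleftrightarrow> (\<forall>x\<in>C. - x \<notin> C)"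

definition sconvex :: "'a::euclidean_space set \<Rightarrow> bool" where
  "sconvex C \<longleftrightarrow> C \<subseteq> S \<and> no_antipodes C \<and> (\<forall>a\<in>C. \<forall>b\<in>C. sarc a b \<subseteq> C)"

definition sinterior :: "'a::euclidean_space set \<Rightarrow> 'a set" where
  "sinterior C = (top_of_set S) interior_of C"

definition sbd :: "'a::euclidean_space set \<Rightarrow> 'a set" where
  "sbd C = (top_of_set S) frontier_of C"

definition convex_body :: "'a::euclidean_space set \<Rightarrow> bool" where
  "convex_body C \<longleftrightarrow> sconvex C \<and> closed C \<and> sinterior C \<noteq> {}"

definition hemi :: "'a::euclidean_space \<Rightarrow> 'a set" where
  "hemi m = {x \<in> S. m \<bullet> x \<ge> 0}"

definition hemisphere :: "'a::euclidean_space set \<Rightarrow> bool" where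
  "hemisphere H \<longleftrightarrow> (\<exists>m\<in>S. H = hemi m)"

definition hcenter :: "'a::euclidean_space set \<Rightarrow> 'a" where
  "hcenter H = (THE m. m \<in> S \<and> H = hemi m)"

definition supports_at :: "'a::euclidean_space set \<Rightarrow> 'a set \<Rightarrow> 'a \<Rightarrow> bool" where
  "supports_at H C p \<longleftrightarrow> hemisphere H \<and> C \<subseteq> H \<and> p \<in> sbd H \<inter> C"

definition supporting :: "'a::euclidean_space set \<Rightarrow> 'a set \<Rightarrow> bool" where
  "supporting H C \<longleftrightarrow> (\<exists>p. supports_at H C p)"

definition smooth_point :: "'a::euclidean_space set \<Rightarrow> 'a \<Rightarrow> bool" where
  "smooth_point C p \<longleftrightarrow> p \<in> sbd C \<and> (\<exists>!H. supports_at H C p)"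

definition smooth :: "'a::euclidean_space set \<Rightarrow> bool" where
  "smooth C \<longleftrightarrow> (\<forall>p\<in>sbd C. smooth_point C p)"

text \<open>For different non-opposite hemispheres G, H with centres g, h, the
  (d-1)-dimensional hemisphere bd(G) \<inter> H has centre equal to the normalised
  projection of h onto the hyperplane g-perp (and symmetrically).  The thickness
  of the lune G \<inter> H is the spherical distance between these two centres.\<close>
definition half_bd_center :: "'a::euclidean_space set \<Rightarrow> 'a set \<Rightarrow> 'a" where
  "half_bd_center G H =
     (let g = hcenter G; h = hcenter H; v = h - (h \<bullet> g) *\<^sub>R g in (1 / norm v) *\<^sub>R v)"

definition lune_pair :: "'a::euclidean_space set \<Rightarrow> 'a set \<Rightarrow> bool" where
  "lune_pair G H \<longleftrightarrow> hemisphere G \<and> hemisphere H \<and> G \<noteq> H \<and> hcenter G \<noteq> - hcenter H"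

definition thickness :: "'a::euclidean_space set \<Rightarrow> 'a set \<Rightarrow> real" where
  "thickness G H = sdist (half_bd_center G H) (half_bd_center H G)"

definition width_wrt :: "'a::euclidean_space set \<Rightarrow> 'a set \<Rightarrow> real" where
  "width_wrt K C = Inf {thickness K K' | K'. lune_pair K K' \<and> C \<subseteq> K \<inter> K'}"

definition constant_width :: "'a::euclidean_space set \<Rightarrow> real \<Rightarrow> bool" where
  "constant_width C w \<longleftrightarrow> (\<forall>K. supporting K C \<longrightarrow> width_wrt K C = w)"

definition sdiam :: "'a::euclidean_space set \<Rightarrow> real" where
  "sdiam D = Sup {sdist x y | x y. x \<in> D \<and> y \<in> D}"

definition constant_diameter :: "'a::euclidean_space set \<Rightarrow> real \<Rightarrow> bool" where
  "constant_diameter D \<delta> \<longleftrightarrow> convex_body D \<and> sdiam D = \<delta> \<and>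
     (\<forall>p\<in>sbd D. \<exists>p'\<in>sbd D. sdist p p' = \<delta>)"

end

theory Submission
  imports Defs
begin


lemma inS[simp]: "x \<in> S \<longleftrightarrow> norm x = 1" by simp

lemma unit_self: "x \<in> S \<Longrightarrow> x \<bullet> x = 1"
  by (metis inS norm_eq_1)

lemma unit_le: assumes "x \<in> S" "y \<in> S" shows "x \<bullet> y \<le> 1" "-1 \<le> x \<bullet> y"
proof -
  have "\<bar>x \<bullet> y\<bar> \<le> 1" using Cauchy_Schwarz_ineq2[of x y] assms by simp
  then show "x \<bullet> y \<le> 1" "-1 \<le> x \<bullet> y" by auto
qed

lemma unit_eq1: assumes "x \<in> S" "y \<in> S" "x \<bullet> y = 1" shows "x = y"
proof -
  have "(x - y) \<bullet> (x - y) = 0" using assms unit_self[of x] unit_self[of y]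
    by (simp add: inner_diff_left inner_diff_right inner_commute)
  then show ?thesis by simp
qed

lemma unit_eqm1: assumes "x \<in> S" "y \<in> S" "x \<bullet> y = -1" shows "y = - x"
proof -
  have "(x + y) \<bullet> (x + y) = 0" using assms unit_self[of x] unit_self[of y]
    by (simp add: inner_add_left inner_add_right inner_commute)
  then have "x + y = 0" by simp
  then show ?thesis by (metis add.commute eq_neg_iff_add_eq_0)
qed

lemma normalize_S: "v \<noteq> 0 \<Longrightarrow> (1 / norm v) *\<^sub>R v \<in> S"
  by simp

lemma hemi_inj: assumes "u \<in> S" "v \<in> S" "hemi u = hemi v" shows "u = v"
proof (rule ccontr)
  assume ne: "u \<noteq> v"
  have t: "u \<bullet> v < 1" using unit_le[OF assms(1,2)] unit_eq1[OF assms(1,2)] ne by force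
  define n where "n = norm (u - v)"
  have n: "n > 0" using ne n_def by simp
  define x where "x = (1/n) *\<^sub>R (u - v)"
  have xS: "x \<in> S" using ne by (simp add: x_def n_def)
  have "u \<bullet> x = (1 - u \<bullet> v) / n" using unit_self[OF assms(1)]
    by (simp add: x_def inner_diff_right)
  then have "u \<bullet> x > 0" using t n by simp
  then have "x \<in> hemi u" using xS by (simp add: hemi_def)
  moreover have "v \<bullet> x = (u \<bullet> v - 1) / n" using unit_self[OF assms(2)]
    by (simp add: x_def inner_diff_right inner_commute)
  then have "v \<bullet> x < 0" using t n by (simp add: divide_neg_pos)
  then have "x \<notin> hemi v" by (simp add: hemi_def)
  ultimately show False using assms(3) by simp
qed

lemma hcenter_hemi: "u \<in> S \<Longrightarrow> hcenter (hemi u) = u"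
  unfolding hcenter_def
  by (rule the_equality) (auto, metis hemi_inj inS)

lemma hemisphere_hemi: "u \<in> S \<Longrightarrow> hemisphere (hemi u)"
  unfolding hemisphere_def by blast

lemma escape:
  assumes xS: "x \<in> S" and gS: "g \<in> S" and gx: "g \<bullet> x = 0" and U: "open U" "x \<in> U"
  shows "\<exists>y\<in>S. y \<in> U \<and> g \<bullet> y < 0"
proof -
  obtain r where r: "r > 0" "ball x r \<subseteq> U" using U open_contains_ball by blast
  define e where "e = min (r/2) 1"
  have e: "e > 0" "e \<le> 1" "e \<le> r/2" using r by (auto simp: e_def)
  define w where "w = x - e *\<^sub>R g"
  have ww: "w \<bullet> w = 1 + e^2" using unit_self[OF xS] unit_self[OF gS] gx
    by (simp add: w_def inner_diff_left inner_diff_right inner_commute power2_eq_square)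
  define N where "N = norm w"
  have N2: "N^2 = 1 + e^2" using ww by (simp add: N_def power2_norm_eq_inner)
  have N0: "N \<ge> 0" by (simp add: N_def)
  have N1: "N \<ge> 1"
  proof -
    have "\<bar>1\<bar> \<le> \<bar>N\<bar>" unfolding abs_le_square_iff using N2 by simp
    then show ?thesis using N0 by simp
  qed
  have N3: "N \<le> 1 + e^2/2"
  proof -
    have "0 \<le> e*(e*(e*e))" using e by simp
    then have "N^2 \<le> (1 + e^2/2)^2" using N2 by (simp add: power2_eq_square algebra_simps)
    then have "\<bar>N\<bar> \<le> \<bar>1 + e^2/2\<bar>" unfolding abs_le_square_iff .
    then show ?thesis using N0 by simp
  qed
  define y where "y = (1/N) *\<^sub>R w"
  have Npos: "N > 0" using N1 by simp
  have yS: "y \<in> S" using Npos by (simp add: y_def N_def)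
  have gy: "g \<bullet> y = - e / N" using unit_self[OF gS] gx
    by (simp add: y_def w_def inner_diff_right)
  have gy0: "g \<bullet> y < 0" using gy e Npos by (simp add: divide_pos_pos)
  have d1: "norm (x - w) = e" using e gS by (simp add: w_def)
  have "w - y = (1 - 1/N) *\<^sub>R w" by (simp add: y_def algebra_simps)
  then have "norm (w - y) = \<bar>1 - 1/N\<bar> * N" by (simp add: N_def)
  also have "\<dots> = N - 1" using N1 Npos by (simp add: field_simps)
  finally have d2: "norm (w - y) = N - 1" .
  have "norm (x - y) \<le> norm (x - w) + norm (w - y)" using norm_diff_triangle_le[of x w "norm(x-w)" y "norm(w-y)"] by simp
  also have "\<dots> \<le> e + e^2/2" using d1 d2 N3 by simp
  also have "\<dots> < r"
  proof -
    have "e^2 \<le> e" using e by (simp add: power2_eq_square mult_le_cancel_left1)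
    then show ?thesis using e r by linarith
  qed
  finally have "y \<in> ball x r" by (simp add: dist_norm)
  then show ?thesis using yS gy0 r by blast
qed

lemma not_interior_escape:
  assumes "x \<in> S" "g \<in> S" "g \<bullet> x = 0" "A \<subseteq> hemi g"
  shows "x \<notin> (top_of_set S) interior_of A"
proof
  assume "x \<in> (top_of_set S) interior_of A"
  then obtain T where T: "openin (top_of_set S) T" "x \<in> T" "T \<subseteq> A"
    unfolding interior_of_def by blast
  from T(1) obtain U where U: "open U" "T = S \<inter> U" by (auto simp: openin_open)
  have xU: "x \<in> U" using T(2) U(2) by blast
  obtain y where "y \<in> S" "y \<in> U" "g \<bullet> y < 0" using escape[OF assms(1-3) U(1) xU] by blast
  then have "y \<in> A" using T U by blast
  then show False using assms(4) \<open>g \<bullet> y < 0\<close> by (auto simp: hemi_def)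
qed

lemma sbd_of_support:
  assumes "C \<subseteq> hemi g" "g \<in> S" "x \<in> C" "g \<bullet> x = 0"
  shows "x \<in> sbd C"
proof -
  have CS: "C \<subseteq> S" using assms(1) by (auto simp: hemi_def)
  have "x \<in> (top_of_set S) closure_of C" using CS assms(3)
    using closure_of_subset[of C "top_of_set S"] by auto
  moreover have "x \<notin> (top_of_set S) interior_of C"
    using not_interior_escape[OF _ assms(2) assms(4) assms(1)] CS assms(3) by blast
  ultimately show ?thesis by (simp add: sbd_def frontier_of_def)
qed

lemma hemi_closed: "closedin (top_of_set S) (hemi g)"
proof -
  have "hemi g = S \<inter> {x. g \<bullet> x \<ge> 0}" by (auto simp: hemi_def)
  then show ?thesis using closedin_closed_Int[OF closed_halfspace_ge[of 0 g]] by simp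
qed

lemma sbd_hemi:
  assumes gS: "g \<in> S"
  shows "x \<in> sbd (hemi g) \<longleftrightarrow> x \<in> S \<and> g \<bullet> x = 0"
proof
  assume "x \<in> S \<and> g \<bullet> x = 0"
  then have "x \<in> hemi g" "g \<bullet> x = 0" by (auto simp: hemi_def)
  then show "x \<in> sbd (hemi g)" using sbd_of_support[OF subset_refl gS] by blast
next
  assume x: "x \<in> sbd (hemi g)"
  then have xS: "x \<in> S" using frontier_of_subset_topspace[of "top_of_set S" "hemi g"] unfolding sbd_def by auto
  have "x \<in> hemi g" using x frontier_of_subset_closedin[OF hemi_closed] unfolding sbd_def by blast
  then have ge: "g \<bullet> x \<ge> 0" by (simp add: hemi_def)
  have "\<not> g \<bullet> x > 0"
  proof
    assume gt: "g \<bullet> x > 0"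
    have "openin (top_of_set S) (S \<inter> {y. g \<bullet> y > 0})" using open_halfspace_gt[of 0 g] by blast
    moreover have "S \<inter> {y. g \<bullet> y > 0} \<subseteq> hemi g" by (auto simp: hemi_def)
    ultimately have "x \<in> (top_of_set S) interior_of (hemi g)"
      using xS gt unfolding interior_of_def by blast
    then show False using x by (simp add: sbd_def frontier_of_def)
  qed
  then show "x \<in> S \<and> g \<bullet> x = 0" using ge xS by simp
qed




lemma inner_strict: assumes "g \<in> S" "h \<in> S" "h \<noteq> g" "h \<noteq> -g"
  shows "-1 < g \<bullet> h" "g \<bullet> h < 1"
  using unit_le[OF assms(1,2)] unit_eq1[OF assms(1,2)] unit_eqm1[OF assms(1,2)] assms(3,4)
  by force+

lemma thick:
  assumes gS: "g \<in> S" and hS: "h \<in> S" and t1: "-1 < g \<bullet> h" and t2: "g \<bullet> h < 1"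
  shows "thickness (hemi g) (hemi h) = arccos (-(g \<bullet> h))"
proof -
  define t where "t = g \<bullet> h"
  have gh: "g \<bullet> h = t" and hg: "h \<bullet> g = t" by (simp_all add: t_def inner_commute)
  have gg: "g \<bullet> g = 1" and hh: "h \<bullet> h = 1" using unit_self gS hS by auto
  define v where "v = h - t *\<^sub>R g"
  define w where "w = g - t *\<^sub>R h"
  have vv: "v \<bullet> v = 1 - t^2"
    unfolding v_def inner_diff_left inner_diff_right inner_scaleR_left inner_scaleR_right gg hh gh hg
    by (simp add: power2_eq_square)
  have ww: "w \<bullet> w = 1 - t^2"
    unfolding w_def inner_diff_left inner_diff_right inner_scaleR_left inner_scaleR_right gg hh gh hg
    by (simp add: power2_eq_square)
  have vw: "v \<bullet> w = - t * (1 - t^2)"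
    unfolding v_def w_def inner_diff_left inner_diff_right inner_scaleR_left inner_scaleR_right gg hh gh hg
    by (simp add: power2_eq_square algebra_simps)
  have "\<bar>t\<bar> < 1" using t1 t2 unfolding t_def by auto
  then have pos: "1 - t^2 > 0" by (simp add: abs_square_less_1)
  have nv: "norm v = sqrt (1 - t^2)" using vv by (simp add: norm_eq_sqrt_inner)
  have nw: "norm w = sqrt (1 - t^2)" using ww by (simp add: norm_eq_sqrt_inner)
  have c1: "half_bd_center (hemi g) (hemi h) = (1 / norm v) *\<^sub>R v"
    unfolding half_bd_center_def Let_def hcenter_hemi[OF gS] hcenter_hemi[OF hS] hg v_def ..
  have c2: "half_bd_center (hemi h) (hemi g) = (1 / norm w) *\<^sub>R w"
    unfolding half_bd_center_def Let_def hcenter_hemi[OF gS] hcenter_hemi[OF hS] gh w_def ..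
  have "((1 / norm v) *\<^sub>R v) \<bullet> ((1 / norm w) *\<^sub>R w) = (v \<bullet> w) / (sqrt (1 - t^2) * sqrt (1 - t^2))"
    unfolding inner_scaleR_left inner_scaleR_right nv nw by simp
  also have "\<dots> = -t" using pos unfolding vw real_sqrt_mult_self by simp
  finally show ?thesis unfolding thickness_def sdist_def c1 c2 t_def by simp
qed

lemma width_eq:
  assumes gS: "g \<in> S" and Cg: "C \<subseteq> hemi g"
  shows "width_wrt (hemi g) C = Inf {arccos (-(g \<bullet> h)) | h. h \<in> S \<and> h \<noteq> g \<and> h \<noteq> -g \<and> C \<subseteq> hemi h}"
proof -
  have "{thickness (hemi g) K' | K'. lune_pair (hemi g) K' \<and> C \<subseteq> hemi g \<inter> K'}
      = {arccos (-(g \<bullet> h)) | h. h \<in> S \<and> h \<noteq> g \<and> h \<noteq> -g \<and> C \<subseteq> hemi h}"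
  proof (intro set_eqI iffI)
    fix x assume "x \<in> {thickness (hemi g) K' | K'. lune_pair (hemi g) K' \<and> C \<subseteq> hemi g \<inter> K'}"
    then obtain K' where K': "x = thickness (hemi g) K'" "lune_pair (hemi g) K'" "C \<subseteq> hemi g \<inter> K'" by blast
    then obtain h where h: "h \<in> S" "K' = hemi h" unfolding lune_pair_def hemisphere_def by blast
    have "h \<noteq> g" using K'(2) h by (auto simp: lune_pair_def)
    moreover have "h \<noteq> -g" using K'(2) h gS by (auto simp: lune_pair_def hcenter_hemi)
    ultimately have "x = arccos (-(g \<bullet> h))" using thick[OF gS h(1)] inner_strict[OF gS h(1)] K'(1) h(2) by simp
    then show "x \<in> {arccos (-(g \<bullet> h)) | h. h \<in> S \<and> h \<noteq> g \<and> h \<noteq> -g \<and> C \<subseteq> hemi h}"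
      using h K'(3) \<open>h \<noteq> g\<close> \<open>h \<noteq> -g\<close> by blast
  next
    fix x assume "x \<in> {arccos (-(g \<bullet> h)) | h. h \<in> S \<and> h \<noteq> g \<and> h \<noteq> -g \<and> C \<subseteq> hemi h}"
    then obtain h where h: "x = arccos (-(g \<bullet> h))" "h \<in> S" "h \<noteq> g" "h \<noteq> -g" "C \<subseteq> hemi h" by blast
    have lp: "lune_pair (hemi g) (hemi h)" unfolding lune_pair_def
      using hemisphere_hemi gS h hemi_inj[OF gS h(2)] hcenter_hemi[OF gS] hcenter_hemi[OF h(2)] by auto
    have "x = thickness (hemi g) (hemi h)" using thick[OF gS h(2)] inner_strict[OF gS h(2)] h by simp
    then show "x \<in> {thickness (hemi g) K' | K'. lune_pair (hemi g) K' \<and> C \<subseteq> hemi g \<inter> K'}"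
      using lp Cg h(5) by blast
  qed
  then show ?thesis unfolding width_wrt_def by simp
qed




lemma first_order:
  assumes cv: "sconvex C" and p: "p \<in> C" and q: "q \<in> C" and mn: "\<forall>z\<in>C. p \<bullet> q \<le> p \<bullet> z"
    and z: "z \<in> C"
  shows "0 \<le> z \<bullet> (p - (p \<bullet> q) *\<^sub>R q)"
proof (rule ccontr)
  define m where "m = p \<bullet> q"
  define a where "a = q \<bullet> z"
  define b where "b = p \<bullet> z"
  assume "\<not> 0 \<le> z \<bullet> (p - (p \<bullet> q) *\<^sub>R q)"
  then have neg: "b - m * a < 0" by (simp add: a_def b_def m_def inner_diff_right inner_commute)
  have CS: "C \<subseteq> S" and na: "no_antipodes C" and arcs: "\<forall>x\<in>C. \<forall>y\<in>C. sarc x y \<subseteq> C"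
    using cv by (auto simp: sconvex_def)
  have qS: "q \<in> S" and zS: "z \<in> S" using CS q z by auto
  have zq: "z \<noteq> -q" using na q z by (auto simp: no_antipodes_def)
  define f where "f = (\<lambda>\<tau>::real. ((1-\<tau>)*m + \<tau>*b) / sqrt((1-\<tau>)^2 + 2*\<tau>*(1-\<tau>)*a + \<tau>^2))"
  have der: "(f has_real_derivative (b - m*a)) (at 0)"
    unfolding f_def
    apply (rule derivative_eq_intros refl | simp)+
    apply (simp add: algebra_simps)
    done
  obtain d where d: "d > 0" "\<forall>h>0. h < d \<longrightarrow> f 0 > f (0 + h)"
    using DERIV_neg_dec_right[OF der neg] by blast
  define \<tau> where "\<tau> = min (d/2) 1"
  have \<tau>: "0 < \<tau>" "\<tau> < d" "\<tau> \<le> 1" using d by (auto simp: \<tau>_def)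
  have f0: "f 0 = m" by (simp add: f_def)
  define v where "v = (1 - \<tau>) *\<^sub>R q + \<tau> *\<^sub>R z"
  have vv: "v \<bullet> v = (1-\<tau>)^2 + 2*\<tau>*(1-\<tau>)*a + \<tau>^2"
    using unit_self[OF qS] unit_self[OF zS]
    by (simp add: v_def a_def inner_add_left inner_add_right inner_commute power2_eq_square algebra_simps)
  have v0: "v \<noteq> 0"
  proof
    assume "v = 0"
    then have "(1 - \<tau>) *\<^sub>R q = - (\<tau> *\<^sub>R z)" unfolding v_def by (metis eq_neg_iff_add_eq_0)
    then have "norm ((1 - \<tau>) *\<^sub>R q) = norm (\<tau> *\<^sub>R z)" by (metis norm_minus_cancel)
    then have "1 - \<tau> = \<tau>" using qS zS \<tau> by simp
    then have th: "\<tau> = 1/2" by simp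
    have "(1/2::real) *\<^sub>R q = (1/2::real) *\<^sub>R (-z)" using \<open>(1 - \<tau>) *\<^sub>R q = - (\<tau> *\<^sub>R z)\<close> unfolding th
      by (simp add: scaleR_right.minus)
    then have "2 *\<^sub>R ((1/2::real) *\<^sub>R q) = 2 *\<^sub>R ((1/2::real) *\<^sub>R (-z))" by metis
    then have "q = -z" by (simp only: scaleR_scaleR) simp
    then show False using zq by simp
  qed
  have "(1 / norm v) *\<^sub>R v \<in> sarc q z" unfolding sarc_def v_def using \<tau> by auto
  then have inC: "(1 / norm v) *\<^sub>R v \<in> C" using arcs q z by blast
  have "m \<le> p \<bullet> ((1 / norm v) *\<^sub>R v)" using mn inC m_def by blast
  also have "\<dots> = f \<tau>"
  proof -
    have pv: "p \<bullet> v = (1-\<tau>)*m + \<tau>*b" by (simp add: v_def m_def b_def inner_add_right)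
    have nv: "norm v = sqrt((1-\<tau>)^2 + 2*\<tau>*(1-\<tau>)*a + \<tau>^2)" using vv by (simp add: norm_eq_sqrt_inner)
    show ?thesis unfolding f_def inner_scaleR_right pv nv by simp
  qed
  finally have "m \<le> f \<tau>" .
  moreover have "f \<tau> < m" using d(2) \<tau> f0 by auto
  ultimately show False by simp
qed




definition sp :: "'a::euclidean_space \<Rightarrow> 'a \<Rightarrow> 'a" where
  "sp p q = (1 / sqrt (1 - (p \<bullet> q)^2)) *\<^sub>R (p - (p \<bullet> q) *\<^sub>R q)"

lemma sp_norm:
  assumes "p \<in> S" "q \<in> S"
  shows "(p - (p \<bullet> q) *\<^sub>R q) \<bullet> (p - (p \<bullet> q) *\<^sub>R q) = 1 - (p \<bullet> q)^2"
proof -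
  have pp: "p \<bullet> p = 1" and qq: "q \<bullet> q = 1" using unit_self assms by auto
  have qp: "q \<bullet> p = p \<bullet> q" by (simp add: inner_commute)
  show ?thesis
    unfolding inner_diff_left inner_diff_right inner_scaleR_left inner_scaleR_right pp qq qp
    by (simp add: power2_eq_square)
qed

lemma sp_basic:
  assumes pS: "p \<in> S" and qS: "q \<in> S" and m1: "-1 < p \<bullet> q" and m2: "p \<bullet> q < 1"
  shows "sp p q \<in> S" "sp p q \<bullet> q = 0" "sp p q \<bullet> sp q p = - (p \<bullet> q)"
    "sqrt (1 - (p \<bullet> q)^2) > 0"
proof -
  define m where "m = p \<bullet> q"
  have "\<bar>m\<bar> < 1" using m1 m2 m_def by auto
  then have pos: "1 - m^2 > 0" by (simp add: abs_square_less_1)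
  define s where "s = sqrt (1 - m^2)"
  have s: "s > 0" using pos by (simp add: s_def)
  have ss: "s * s = 1 - m^2" using pos by (simp add: s_def)
  then show "sqrt (1 - (p \<bullet> q)^2) > 0" using s by (simp add: s_def m_def)
  have pp: "p \<bullet> p = 1" and qq: "q \<bullet> q = 1" using unit_self pS qS by auto
  have qp: "q \<bullet> p = m" and pq: "p \<bullet> q = m" by (simp_all add: m_def inner_commute)
  have nn: "(p - m *\<^sub>R q) \<bullet> (p - m *\<^sub>R q) = s * s" using sp_norm[OF pS qS] ss by (simp add: m_def)
  have "norm (p - m *\<^sub>R q) = s" using nn s by (simp add: norm_eq_sqrt_inner)
  then show "sp p q \<in> S" using s by (simp add: sp_def m_def[symmetric] s_def[symmetric])
  show "sp p q \<bullet> q = 0"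
    unfolding sp_def m_def[symmetric] inner_scaleR_left inner_diff_left qq by simp
  have "(p - m *\<^sub>R q) \<bullet> (q - m *\<^sub>R p) = - m * (s * s)"
    unfolding inner_diff_left inner_diff_right inner_scaleR_left inner_scaleR_right pp qq qp pq ss
    by (simp add: power2_eq_square algebra_simps)
  then show "sp p q \<bullet> sp q p = - (p \<bullet> q)"
    unfolding sp_def m_def[symmetric] qp[unfolded m_def] s_def[symmetric] inner_scaleR_left inner_scaleR_right
    using s by (simp add: m_def)
qed

lemma sp_hemi:
  assumes cv: "sconvex C" and p: "p \<in> C" and q: "q \<in> C" and mn: "\<forall>z\<in>C. p \<bullet> q \<le> p \<bullet> z"
    and m1: "-1 < p \<bullet> q" and m2: "p \<bullet> q < 1"
  shows "C \<subseteq> hemi (sp p q)" "sp p q \<in> S"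
proof -
  have CS: "C \<subseteq> S" using cv by (auto simp: sconvex_def)
  note b = sp_basic[OF subsetD[OF CS p] subsetD[OF CS q] m1 m2]
  show "sp p q \<in> S" using b by simp
  show "C \<subseteq> hemi (sp p q)"
  proof
    fix z assume z: "z \<in> C"
    have "0 \<le> z \<bullet> (p - (p \<bullet> q) *\<^sub>R q)" by (rule first_order[OF cv p q mn z])
    then have "0 \<le> sp p q \<bullet> z" using b(4) unfolding sp_def inner_scaleR_left
      by (simp add: inner_commute)
    then show "z \<in> hemi (sp p q)" using z CS by (auto simp: hemi_def)
  qed
qed

lemma sp_lower:
  assumes pS: "p \<in> S" and qS: "q \<in> S" and hS: "h \<in> S" and hp: "0 \<le> h \<bullet> p" and hq: "0 \<le> h \<bullet> q"
    and m1: "-1 < p \<bullet> q" and m2: "p \<bullet> q < 1"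
  shows "sp p q \<bullet> h \<ge> - max (p \<bullet> q) 0"
proof -
  define m where "m = p \<bullet> q"
  note b = sp_basic[OF pS qS m1 m2]
  define s where "s = sqrt (1 - m^2)"
  have s: "s > 0" using b(4) by (simp add: s_def m_def)
  have ss: "s * s = 1 - m^2" using s by (simp add: s_def)
  have key: "(p - m *\<^sub>R q) \<bullet> h \<ge> - max m 0 * s"
  proof (cases "m > 0")
    case False
    have "(p - m *\<^sub>R q) \<bullet> h = p \<bullet> h - m * (q \<bullet> h)" by (simp add: inner_diff_left)
    also have "\<dots> \<ge> 0"
    proof -
      have "m * (q \<bullet> h) \<le> 0" using False hq by (simp add: inner_commute mult_nonpos_nonneg)
      then show ?thesis using hp by (simp add: inner_commute)
    qed
    finally show ?thesis using False by simp
  next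
    case True
    have qp: "q \<bullet> p = m" by (simp add: m_def inner_commute)
    have nn: "(q - m *\<^sub>R p) \<bullet> (q - m *\<^sub>R p) = s * s" using sp_norm[OF qS pS] ss qp by simp
    have nq: "norm (q - m *\<^sub>R p) = s" using nn s by (simp add: norm_eq_sqrt_inner)
    have cs: "(q - m *\<^sub>R p) \<bullet> h \<le> s" using norm_cauchy_schwarz[of "q - m *\<^sub>R p" h] nq hS by simp
    have id: "p - m *\<^sub>R q = (1 - m^2) *\<^sub>R p - m *\<^sub>R (q - m *\<^sub>R p)"
      by (simp add: algebra_simps power2_eq_square)
    have "(p - m *\<^sub>R q) \<bullet> h = (1 - m^2) * (p \<bullet> h) - m * ((q - m *\<^sub>R p) \<bullet> h)"
      unfolding id inner_diff_left inner_scaleR_left ..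
    moreover have "(1 - m^2) * (p \<bullet> h) \<ge> 0" using hp ss s
      by (metis inner_commute mult_nonneg_nonneg less_eq_real_def mult_pos_pos)
    moreover have "m * ((q - m *\<^sub>R p) \<bullet> h) \<le> m * s" using cs True by (simp add: mult_left_mono)
    ultimately have "(p - m *\<^sub>R q) \<bullet> h \<ge> - (m * s)" by linarith
    then show ?thesis using True by simp
  qed
  have "sp p q \<bullet> h = (1/s) * ((p - m *\<^sub>R q) \<bullet> h)" by (simp add: sp_def m_def s_def)
  also have "\<dots> \<ge> - max m 0" using key s by (simp add: pos_le_divide_eq)
  finally show ?thesis by (simp add: m_def)
qed

lemma width_le:
  assumes gS: "g \<in> S" and Cg: "C \<subseteq> hemi g" and hS: "h \<in> S" "h \<noteq> g" "h \<noteq> -g" "C \<subseteq> hemi h"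
  shows "width_wrt (hemi g) C \<le> arccos (-(g \<bullet> h))"
  unfolding width_eq[OF gS Cg]
proof (rule cInf_lower)
  show "arccos (-(g \<bullet> h)) \<in> {arccos (-(g \<bullet> h)) | h. h \<in> S \<and> h \<noteq> g \<and> h \<noteq> -g \<and> C \<subseteq> hemi h}"
    using hS by blast
  show "bdd_below {arccos (-(g \<bullet> h)) | h. h \<in> S \<and> h \<noteq> g \<and> h \<noteq> -g \<and> C \<subseteq> hemi h}"
    unfolding bdd_below_def
    using gS by (intro exI[of _ 0]) (auto intro!: arccos_lbound unit_le simp: inner_commute)
qed

lemma width_ge:
  assumes gS: "g \<in> S" and Cg: "C \<subseteq> hemi g" and hS: "h \<in> S" "h \<noteq> g" "h \<noteq> -g" "C \<subseteq> hemi h"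
    and lo: "\<forall>h'\<in>S. C \<subseteq> hemi h' \<longrightarrow> -(g \<bullet> h') \<le> \<mu>" and mu: "\<mu> \<le> 1"
  shows "width_wrt (hemi g) C \<ge> arccos \<mu>"
  unfolding width_eq[OF gS Cg]
proof (rule cInf_greatest)
  show "{arccos (-(g \<bullet> h)) | h. h \<in> S \<and> h \<noteq> g \<and> h \<noteq> -g \<and> C \<subseteq> hemi h} \<noteq> {}"
    using hS by blast
  fix x assume "x \<in> {arccos (-(g \<bullet> h)) | h. h \<in> S \<and> h \<noteq> g \<and> h \<noteq> -g \<and> C \<subseteq> hemi h}"
  then obtain h' where h': "x = arccos (-(g \<bullet> h'))" "h' \<in> S" "C \<subseteq> hemi h'" by blast
  have "-1 \<le> -(g \<bullet> h')" using unit_le[OF gS h'(2)] by simp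
  moreover have "-(g \<bullet> h') \<le> \<mu>" using lo h' by blast
  ultimately show "arccos \<mu> \<le> x" using h'(1) mu by (simp add: arccos_le_arccos)
qed




lemma notsingle:
  assumes cb: "convex_body (C::'a::euclidean_space set)" and dim: "2 \<le> DIM('a)"
  shows "\<exists>x\<in>C. \<exists>y\<in>C. x \<noteq> y"
proof (rule ccontr)
  assume "\<not> (\<exists>x\<in>C. \<exists>y\<in>C. x \<noteq> y)"
  then have all: "\<forall>x\<in>C. \<forall>y\<in>C. x = y" by blast
  have CS: "C \<subseteq> S" using cb unfolding convex_body_def sconvex_def by blast
  obtain x0 where x0: "x0 \<in> (top_of_set S) interior_of C"
    using cb unfolding convex_body_def sinterior_def by blast
  have x0C: "x0 \<in> C" using interior_of_subset[of "top_of_set S" C] x0 by blast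
  have Ceq: "C = {x0}" using all x0C by blast
  have intEq: "(top_of_set S) interior_of C = {x0}" using x0 interior_of_subset[of "top_of_set S" C] Ceq by blast
  have op: "openin (top_of_set S) {x0}" using openin_interior_of[of "top_of_set S" C] intEq by simp
  have x0S: "x0 \<in> S" using CS x0C by blast
  have cl: "closedin (top_of_set S) {x0}" using closed_subset[of "{x0}" S] x0S by simp
  have conS: "connected (S::'a set)" by (rule connected_sphere[OF dim])
  have "{x0} = {} \<or> {x0} = S" using iffD1[OF connected_clopen, OF conS] op cl by blast
  then have "{x0} = S" by simp
  moreover have "-x0 \<in> S" using x0S by simp
  moreover have "-x0 \<noteq> x0"
  proof
    assume h: "-x0 = x0"
    have "x0 \<bullet> (-x0) = x0 \<bullet> x0" using h by simp
    then show False using unit_self[OF x0S] by simp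
  qed
  ultimately show False by blast
qed

theorem theorem1:
  fixes D :: "'a::euclidean_space set" and d :: nat and \<delta> :: real
  assumes "DIM('a) = d + 1" and "d \<ge> 2"
    and "0 < \<delta>" and "\<delta> < pi / 2"
    and "convex_body D" and "smooth D"
  shows "constant_diameter D \<delta> \<longleftrightarrow> constant_width D \<delta>"
proof -
  have dim: "2 \<le> DIM('a)" using assms(1,2) by simp
  have cb: "convex_body D" by fact
  have cv: "sconvex D" and clD: "closed D" using cb unfolding convex_body_def by blast+
  have DS: "D \<subseteq> S" and na: "no_antipodes D" using cv unfolding sconvex_def by blast+
  have sm: "\<forall>p\<in>sbd D. smooth_point D p" using assms(6) by (simp add: smooth_def)
  have sbdD: "sbd D \<subseteq> D" unfolding sbd_def by (rule frontier_of_subset_closedin[OF closed_subset[OF DS clD]])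
  define c where "c = cos \<delta>"
  have c0: "0 < c" unfolding c_def using assms(3,4) by (intro cos_gt_zero_pi) auto
  have c1: "c < 1" unfolding c_def using cos_monotone_0_pi[of 0 \<delta>] assms(3,4) by simp
  have acc: "arccos c = \<delta>" unfolding c_def using assms(3,4) by (intro arccos_cos) auto
  have cpD: "compact D"
  proof -
    have "compact (S \<inter> D)" using compact_Int_closed[OF compact_sphere clD] by simp
    moreover have "S \<inter> D = D" using DS by blast
    ultimately show ?thesis by simp
  qed
  have Dne: "D \<noteq> {}" using notsingle[OF cb dim] by blast
  show ?thesis
  proof
    assume cd: "constant_diameter D \<delta>"
    have diam: "sdiam D = \<delta>" and bd: "\<forall>p\<in>sbd D. \<exists>p'\<in>sbd D. sdist p p' = \<delta>"
      using cd by (auto simp: constant_diameter_def)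
    have allp: "c \<le> x \<bullet> y" if x: "x \<in> D" and y: "y \<in> D" for x y
    proof -
      have arcb: "arccos (x \<bullet> y) \<le> pi" if "x \<in> D" "y \<in> D" for x y
      proof -
        have "x \<in> S" "y \<in> S" using that DS by auto
        then show ?thesis by (intro arccos_ubound unit_le)
      qed
      have bdd: "bdd_above {sdist x y | x y. x \<in> D \<and> y \<in> D}"
        unfolding bdd_above_def sdist_def using arcb by (intro exI[of _ pi]) auto
      have "sdist x y \<le> sdiam D" unfolding sdiam_def by (rule cSup_upper) (use x y bdd in blast)+
      then have le: "arccos (x \<bullet> y) \<le> \<delta>" using diam by (simp add: sdist_def)
      have xy: "-1 \<le> x \<bullet> y" "x \<bullet> y \<le> 1" using unit_le x y DS by blast+
      have "cos \<delta> \<le> cos (arccos (x \<bullet> y))"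
        using le assms(3,4) by (intro cos_monotone_0_pi_le) (auto intro: arccos_lbound xy)
      then show ?thesis using xy by (simp add: c_def cos_arccos)
    qed
    show "constant_width D \<delta>" unfolding constant_width_def
    proof (intro allI impI)
      fix K assume "supporting K D"
      then obtain p where sp: "supports_at K D p" by (auto simp: supporting_def)
      then obtain g where gS: "g \<in> S" and K: "K = hemi g"
        by (auto simp: supports_at_def hemisphere_def)
      have Dg: "D \<subseteq> hemi g" and pK: "p \<in> sbd (hemi g)" and pD: "p \<in> D"
        using sp K by (auto simp: supports_at_def)
      have gp: "g \<bullet> p = 0" using pK sbd_hemi[OF gS] by blast
      have psbd: "p \<in> sbd D" by (rule sbd_of_support[OF Dg gS pD gp])
      obtain p' where p': "p' \<in> sbd D" "sdist p p' = \<delta>" using bd psbd by blast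
      have p'D: "p' \<in> D" using p' sbdD by blast
      have pS: "p \<in> S" and p'S: "p' \<in> S" using pD p'D DS by auto
      have xy: "-1 \<le> p \<bullet> p'" "p \<bullet> p' \<le> 1" using unit_le pS p'S by blast+
      have pp': "p \<bullet> p' = c" using p'(2) xy by (metis c_def cos_arccos sdist_def)
      have p'p: "p' \<bullet> p = c" using pp' by (simp add: inner_commute)
      have m1: "-1 < c" using c0 by simp
      have min1: "\<forall>z\<in>D. p' \<bullet> p \<le> p' \<bullet> z" using allp p'D p'p by simp
      have min2: "\<forall>z\<in>D. p \<bullet> p' \<le> p \<bullet> z" using allp pD pp' by simp
      note h1 = sp_hemi[OF cv p'D pD min1, unfolded p'p, OF m1 c1]
      note h2 = sp_hemi[OF cv pD p'D min2, unfolded pp', OF m1 c1]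
      note b1 = sp_basic[OF p'S pS, unfolded p'p, OF m1 c1]
      have sup2: "supports_at (hemi (sp p' p)) D p"
        unfolding supports_at_def using hemisphere_hemi[OF h1(2)] h1(1) pD sbd_hemi[OF h1(2)] pS b1(2) by blast
      have "\<exists>!H. supports_at H D p" using sm psbd by (simp add: smooth_point_def)
      then have "hemi g = hemi (sp p' p)" using sp K sup2 by blast
      then have geq: "g = sp p' p" using hemi_inj[OF gS h1(2)] by blast
      have ggp: "g \<bullet> sp p p' = - c" using b1(3) geq by simp
      have gg: "g \<bullet> g = 1" using unit_self[OF gS] .
      have ne1: "sp p p' \<noteq> g" using ggp gg c0 by auto
      have ne2: "sp p p' \<noteq> -g" using ggp gg c1 by auto
      have up: "width_wrt (hemi g) D \<le> arccos (-(g \<bullet> sp p p'))"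
        by (rule width_le[OF gS Dg h2(2) ne1 ne2 h2(1)])
      have lo: "\<forall>h'\<in>S. D \<subseteq> hemi h' \<longrightarrow> -(g \<bullet> h') \<le> c"
      proof (intro ballI impI)
        fix h' assume hS: "h' \<in> S" and Dh: "D \<subseteq> hemi h'"
        have "0 \<le> h' \<bullet> p" "0 \<le> h' \<bullet> p'" using Dh pD p'D by (auto simp: hemi_def)
        then have "sp p' p \<bullet> h' \<ge> - max (p' \<bullet> p) 0" using sp_lower[OF p'S pS hS] m1 c1 p'p by simp
        then show "-(g \<bullet> h') \<le> c" using geq p'p c0 by simp
      qed
      have dn: "width_wrt (hemi g) D \<ge> arccos c"
        by (rule width_ge[OF gS Dg h2(2) ne1 ne2 h2(1) lo]) (use c1 in simp)
      show "width_wrt K D = \<delta>" using up dn ggp acc K by simp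
    qed
  next
    assume cw: "constant_width D \<delta>"
    then have cwK: "\<And>K. supporting K D \<Longrightarrow> width_wrt K D = \<delta>" by (simp add: constant_width_def)
    have cont: "continuous_on (D \<times> D) (\<lambda>z. fst z \<bullet> snd z)" by (intro continuous_intros)
    have DDne: "D \<times> D \<noteq> {}" using Dne by auto
    obtain z0 where z0: "z0 \<in> D \<times> D" "\<forall>z\<in>D \<times> D. fst z0 \<bullet> snd z0 \<le> fst z \<bullet> snd z"
      using continuous_attains_inf[OF compact_Times[OF cpD cpD] DDne cont] by blast
    define x0 where "x0 = fst z0"
    define y0 where "y0 = snd z0"
    have x0D: "x0 \<in> D" and y0D: "y0 \<in> D" using z0 by (auto simp: x0_def y0_def mem_Times_iff)
    have gmin: "\<forall>x\<in>D. \<forall>y\<in>D. x0 \<bullet> y0 \<le> x \<bullet> y" using z0(2) by (auto simp: x0_def y0_def)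
    define t where "t = x0 \<bullet> y0"
    have x0S: "x0 \<in> S" and y0S: "y0 \<in> S" using x0D y0D DS by auto
    have t1: "t < 1"
    proof (rule ccontr)
      assume "\<not> t < 1"
      then have t1': "1 \<le> t" by simp
      have "\<forall>x\<in>D. \<forall>y\<in>D. x = y"
      proof (intro ballI)
        fix x y assume x: "x \<in> D" and y: "y \<in> D"
        have xS: "x \<in> S" and yS: "y \<in> S" using x y DS by auto
        have "t \<le> x \<bullet> y" using gmin x y t_def by simp
        moreover have "x \<bullet> y \<le> 1" using unit_le[OF xS yS] by simp
        ultimately have "x \<bullet> y = 1" using t1' by simp
        then show "x = y" using unit_eq1[OF xS yS] by simp
      qed
      then show False using notsingle[OF cb dim] by blast
    qed
    have tm1: "-1 < t"
    proof (rule ccontr)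
      assume "\<not> -1 < t"
      then have "x0 \<bullet> y0 = -1" using unit_le[OF x0S y0S] t_def by simp
      then have "y0 = -x0" using unit_eqm1[OF x0S y0S] by simp
      then show False using na x0D y0D by (auto simp: no_antipodes_def)
    qed
    have minx: "\<forall>z\<in>D. x0 \<bullet> y0 \<le> x0 \<bullet> z" using gmin x0D by blast
    have miny: "\<forall>z\<in>D. y0 \<bullet> x0 \<le> y0 \<bullet> z" using gmin y0D by (simp add: inner_commute)
    have yx: "y0 \<bullet> x0 = t" by (simp add: t_def inner_commute)
    note hx = sp_hemi[OF cv x0D y0D minx, folded t_def, OF tm1 t1]
    note hy = sp_hemi[OF cv y0D x0D miny, unfolded yx, OF tm1 t1]
    note bx = sp_basic[OF x0S y0S, folded t_def, OF tm1 t1]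
    define g' where "g' = sp x0 y0"
    have g'S: "g' \<in> S" and Dg': "D \<subseteq> hemi g'" using hx by (auto simp: g'_def)
    have "supports_at (hemi g') D y0"
      unfolding supports_at_def using hemisphere_hemi[OF g'S] Dg' y0D sbd_hemi[OF g'S] y0S bx(2)
      by (auto simp: g'_def)
    then have wd: "width_wrt (hemi g') D = \<delta>" using cwK by (auto simp: supporting_def)
    have gg0: "g' \<bullet> sp y0 x0 = - t" using bx(3) by (simp add: g'_def)
    have gg: "g' \<bullet> g' = 1" using unit_self[OF g'S] .
    have ne1: "sp y0 x0 \<noteq> g'" using gg0 gg tm1 by auto
    have ne2: "sp y0 x0 \<noteq> -g'" using gg0 gg t1 by auto
    have up: "width_wrt (hemi g') D \<le> arccos t"
      using width_le[OF g'S Dg' hy(2) ne1 ne2 hy(1)] gg0 by simp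
    have lo: "\<forall>h'\<in>S. D \<subseteq> hemi h' \<longrightarrow> -(g' \<bullet> h') \<le> max t 0"
    proof (intro ballI impI)
      fix h' assume hS: "h' \<in> S" and Dh: "D \<subseteq> hemi h'"
      have "0 \<le> h' \<bullet> x0" "0 \<le> h' \<bullet> y0" using Dh x0D y0D by (auto simp: hemi_def)
      then have "sp x0 y0 \<bullet> h' \<ge> - max (x0 \<bullet> y0) 0" using sp_lower[OF x0S y0S hS] tm1 t1 t_def by simp
      then show "-(g' \<bullet> h') \<le> max t 0" by (simp add: g'_def t_def)
    qed
    have dn: "width_wrt (hemi g') D \<ge> arccos (max t 0)"
      by (rule width_ge[OF g'S Dg' hy(2) ne1 ne2 hy(1) lo]) (use t1 in simp)
    have tpos: "t > 0"
    proof (rule ccontr)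
      assume "\<not> t > 0"
      then have "arccos (max t 0) = pi/2" by simp
      then show False using dn wd assms(4) by simp
    qed
    have tc: "t = c"
    proof -
      have "arccos t = \<delta>" using up dn wd tpos by simp
      then show ?thesis using tm1 t1 by (metis c_def cos_arccos less_eq_real_def)
    qed
    have allp: "c \<le> x \<bullet> y" if "x \<in> D" "y \<in> D" for x y using gmin that tc t_def by simp
    have sdle: "sdist x y \<le> \<delta>" if x: "x \<in> D" and y: "y \<in> D" for x y
    proof -
      have "x \<bullet> y \<le> 1" using unit_le x y DS by blast
      then have "arccos (x \<bullet> y) \<le> arccos c" using allp[OF x y] c0 by (intro arccos_le_arccos) auto
      then show ?thesis using acc by (simp add: sdist_def)
    qed
    have diam: "sdiam D = \<delta>"
      unfolding sdiam_def
    proof (rule cSup_eq_maximum)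
      show "\<delta> \<in> {sdist x y | x y. x \<in> D \<and> y \<in> D}"
        using x0D y0D acc tc t_def by (auto simp: sdist_def)
      show "\<And>x. x \<in> {sdist x y | x y. x \<in> D \<and> y \<in> D} \<Longrightarrow> x \<le> \<delta>" using sdle by blast
    qed
    have bd: "\<exists>p'\<in>sbd D. sdist p p' = \<delta>" if psbd: "p \<in> sbd D" for p
    proof -
      have pD: "p \<in> D" using psbd sbdD by blast
      have pS: "p \<in> S" using pD DS by blast
      obtain H where sp: "supports_at H D p" using sm psbd by (auto simp: smooth_point_def)
      then obtain g where gS: "g \<in> S" and K: "H = hemi g"
        by (auto simp: supports_at_def hemisphere_def)
      have Dg: "D \<subseteq> hemi g" and pK: "p \<in> sbd (hemi g)"
        using sp K by (auto simp: supports_at_def)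
      have gp: "g \<bullet> p = 0" using pK sbd_hemi[OF gS] by blast
      have wg: "width_wrt (hemi g) D = \<delta>" using cwK sp K by (auto simp: supporting_def)
      have contp: "continuous_on D (\<lambda>z. p \<bullet> z)" by (intro continuous_intros)
      obtain p' where p'D: "p' \<in> D" and pmin: "\<forall>z\<in>D. p \<bullet> p' \<le> p \<bullet> z"
        using continuous_attains_inf[OF cpD Dne contp] by blast
      define m where "m = p \<bullet> p'"
      have mc: "c \<le> m" using allp[OF pD p'D] m_def by simp
      have p'S: "p' \<in> S" using p'D DS by blast
      have m1: "m \<le> 1" using unit_le[OF pS p'S] m_def by simp
      have meq: "m = c"
      proof (rule ccontr)
        assume "m \<noteq> c"
        then have mgt: "m > c" using mc by simp
        have am: "arccos m < \<delta>" using acc arccos_less_arccos[of c m] mgt m1 c0 by simp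
        have am0: "0 \<le> arccos m" by (rule arccos_lbound) (use mc c0 m1 in auto)
        define \<rho> where "\<rho> = (arccos m + \<delta>) / 2"
        have r0: "0 < \<rho>" "\<rho> < \<delta>" "arccos m \<le> \<rho>" using am am0 assms(3) by (auto simp: \<rho>_def)
        have rpi: "\<rho> < pi/2" using r0 assms(4) by simp
        have cr: "cos \<rho> \<le> m"
        proof -
          have "cos \<rho> \<le> cos (arccos m)" using r0 am0 rpi by (intro cos_monotone_0_pi_le) auto
          then show ?thesis using m1 mc c0 by (simp add: cos_arccos)
        qed
        have cr0: "0 < cos \<rho>" using r0 rpi by (intro cos_gt_zero_pi) auto
        have cr1: "cos \<rho> < 1" using cos_monotone_0_pi[of 0 \<rho>] r0 rpi by simp
        have sr0: "0 < sin \<rho>" using r0 rpi by (intro sin_gt_zero) auto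
        define h0 where "h0 = sin \<rho> *\<^sub>R p - cos \<rho> *\<^sub>R g"
        have pp: "p \<bullet> p = 1" and gg: "g \<bullet> g = 1" using unit_self pS gS by auto
        have pg: "p \<bullet> g = 0" using gp by (simp add: inner_commute)
        have "h0 \<bullet> h0 = (sin \<rho>)^2 + (cos \<rho>)^2"
          unfolding h0_def inner_diff_left inner_diff_right inner_scaleR_left inner_scaleR_right pp gg pg gp
          by (simp add: power2_eq_square)
        then have "h0 \<bullet> h0 = 1" by simp
        then have h0S: "h0 \<in> S" by (simp add: norm_eq_sqrt_inner)
        have Dh0: "D \<subseteq> hemi h0"
        proof
          fix z assume zD: "z \<in> D"
          have zS: "z \<in> S" using zD DS by blast
          define \<alpha> where "\<alpha> = p \<bullet> z"
          define \<beta> where "\<beta> = g \<bullet> z"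
          have a: "cos \<rho> \<le> \<alpha>" using pmin zD cr m_def \<alpha>_def by fastforce
          have b: "0 \<le> \<beta>" using Dg zD by (auto simp: hemi_def \<beta>_def)
          have zz: "z \<bullet> z = 1" using unit_self zS by auto
          have zp: "z \<bullet> p = \<alpha>" and zg: "z \<bullet> g = \<beta>" by (simp_all add: \<alpha>_def \<beta>_def inner_commute)
          have "0 \<le> (z - \<alpha> *\<^sub>R p - \<beta> *\<^sub>R g) \<bullet> (z - \<alpha> *\<^sub>R p - \<beta> *\<^sub>R g)" by simp
          also have "\<dots> = 1 - \<alpha>^2 - \<beta>^2"
            unfolding inner_diff_left inner_diff_right inner_scaleR_left inner_scaleR_right pp gg pg gp zz zp zg
              \<alpha>_def[symmetric] \<beta>_def[symmetric]
            by (simp add: power2_eq_square algebra_simps)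
          finally have bes: "\<beta>^2 \<le> 1 - \<alpha>^2" by simp
          have "(cos \<rho>)^2 \<le> \<alpha>^2" using a cr0 by (intro power_mono) auto
          then have "\<beta>^2 \<le> (sin \<rho>)^2" using bes by (simp add: sin_squared_eq)
          then have "\<bar>\<beta>\<bar> \<le> \<bar>sin \<rho>\<bar>" by (simp add: abs_le_square_iff)
          then have bs: "\<beta> \<le> sin \<rho>" using b sr0 by simp
          have "sin \<rho> * cos \<rho> \<le> sin \<rho> * \<alpha>" using a sr0 by (intro mult_left_mono) auto
          moreover have "cos \<rho> * \<beta> \<le> cos \<rho> * sin \<rho>" using bs cr0 by (intro mult_left_mono) auto
          ultimately have "0 \<le> sin \<rho> * \<alpha> - cos \<rho> * \<beta>" by (simp add: mult.commute)
          moreover have "h0 \<bullet> z = sin \<rho> * \<alpha> - cos \<rho> * \<beta>"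
            by (simp add: h0_def inner_diff_left \<alpha>_def \<beta>_def)
          ultimately show "z \<in> hemi h0" using zS by (simp add: hemi_def)
        qed
        have gh0: "g \<bullet> h0 = - cos \<rho>"
          unfolding h0_def inner_diff_right inner_scaleR_right gp gg by simp
        have ne1: "h0 \<noteq> g" using gh0 gg cr0 by auto
        have ne2: "h0 \<noteq> -g" using gh0 gg cr1 by auto
        have "width_wrt (hemi g) D \<le> arccos (-(g \<bullet> h0))"
          by (rule width_le[OF gS Dg h0S ne1 ne2 Dh0])
        also have "\<dots> = \<rho>" using gh0 r0 rpi by (simp add: arccos_cos)
        finally show False using wg r0 by simp
      qed
      have m1': "-1 < p \<bullet> p'" and m2': "p \<bullet> p' < 1" using meq m_def c0 c1 by auto
      note hh = sp_hemi[OF cv pD p'D pmin m1' m2']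
      note bb = sp_basic[OF pS p'S m1' m2']
      have "p' \<in> sbd D" by (rule sbd_of_support[OF hh(1) hh(2) p'D bb(2)])
      moreover have "sdist p p' = \<delta>" using meq m_def acc by (simp add: sdist_def)
      ultimately show ?thesis by blast
    qed
    show "constant_diameter D \<delta>" unfolding constant_diameter_def using cb diam bd by blast
  qed
qed


end
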